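(* Let $b\in\mathbb R$, $\omega>0$, $\mathcal B>0$, $t\ge0$, and let $\varphi(t,x,y,\eta)$ be the phase function described in the context. Then the set of solutions $(x,y,\eta)$ (with $y\ne0$, $y\wedge\eta\ne b$) of the equation $\varphi_\eta(t,x,y,\eta)=0$ is contained in the set $$\Big\{(x,y,\eta):\ x\wedge y=-\frac{\sin(\omega t)}{\omega}\,(y\wedge\eta-b)\Big\}.$$
   Context: $A(x)=\big(-b\,x_2/|x|^2,\ b\,x_1/|x|^2\big)$ for $x\ne0$; $u\wedge v=u_1v_2-u_2v_1$. The Hamiltonian is $h(x,\xi)=\frac12|\xi-A(x)|^2+\frac{\omega^2}{2}|x|^2$; for $y\ne0$, $y\wedge\eta\neq b$, $(x^t,\xi^t)=(x^t(y,\eta),\xi^t(y,\eta))$ solves $\dot x^t=\xi^t-A(x^t)$, $\dot\xi^t=-h_x(x^t,\xi^t)$, $x^0=y$, $\xi^0=\eta$. The action is $S(t,y,\eta)=\int_0^t\big(h_\xi(x^s,\xi^s)\cdot\xi^s-h(x^s,\xi^s)\big)ds$, and $\varphi(t,x,y,\eta)=S(t,y,\eta)+(x-x^t)\cdot\xi^t+i\mathcal B|x-x^t|^2/2$. $\varphi_\eta$ is the gradient in $\eta$. *)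

theory Defs
  imports "HOL-Analysis.Analysis"
begin

type_synonym vec2 = "real \<times> real"

definition wedge :: "vec2 \<Rightarrow> vec2 \<Rightarrow> real" where
  "wedge u v = fst u * snd v - snd u * fst v"

definition Apot :: "real \<Rightarrow> vec2 \<Rightarrow> vec2" where
  "Apot b x = (- b * snd x / (norm x)^2, b * fst x / (norm x)^2)"

definition ham :: "real \<Rightarrow> real \<Rightarrow> vec2 \<Rightarrow> vec2 \<Rightarrow> real" where
  "ham b \<omega> x \<xi> = (norm (\<xi> - Apot b x))^2 / 2 + \<omega>^2 / 2 * (norm x)^2"

text \<open>X t y eta, Xi t y eta is the Hamiltonian flow starting at (y,eta), for every
admissible initial datum (y \<noteq> 0, y \<and> eta \<noteq> b), for all times s \<ge> 0:
x' = xi - A(x), xi' = - h_x(x,xi), where h_x is the gradient of h in x.\<close>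
definition is_flow ::
  "real \<Rightarrow> real \<Rightarrow> (real \<Rightarrow> vec2 \<Rightarrow> vec2 \<Rightarrow> vec2) \<Rightarrow> (real \<Rightarrow> vec2 \<Rightarrow> vec2 \<Rightarrow> vec2) \<Rightarrow> bool" where
  "is_flow b \<omega> X \<Xi> \<longleftrightarrow>
     (\<forall>y \<eta>. y \<noteq> 0 \<and> wedge y \<eta> \<noteq> b \<longrightarrow>
        X 0 y \<eta> = y \<and> \<Xi> 0 y \<eta> = \<eta> \<and>
        (\<forall>s\<ge>0. X s y \<eta> \<noteq> 0 \<and>
           ((\<lambda>r. X r y \<eta>) has_vector_derivative (\<Xi> s y \<eta> - Apot b (X s y \<eta>))) (at s within {0..}) \<and>
           (\<exists>v. ((\<lambda>r. \<Xi> r y \<eta>) has_vector_derivative v) (at s within {0..}) \<and>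
                ((\<lambda>z. ham b \<omega> z (\<Xi> s y \<eta>)) has_derivative (\<lambda>w. - (v \<bullet> w))) (at (X s y \<eta>)))))"

text \<open>Action S(t,y,eta) = int_0^t (h_xi . xi - h) ds, with h_xi(x,xi) = xi - A(x).\<close>
definition action ::
  "real \<Rightarrow> real \<Rightarrow> (real \<Rightarrow> vec2 \<Rightarrow> vec2 \<Rightarrow> vec2) \<Rightarrow> (real \<Rightarrow> vec2 \<Rightarrow> vec2 \<Rightarrow> vec2) \<Rightarrow>
   real \<Rightarrow> vec2 \<Rightarrow> vec2 \<Rightarrow> real" where
  "action b \<omega> X \<Xi> t y \<eta> =
     integral {0..t} (\<lambda>s. (\<Xi> s y \<eta> - Apot b (X s y \<eta>)) \<bullet> \<Xi> s y \<eta> - ham b \<omega> (X s y \<eta>) (\<Xi> s y \<eta>))"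

definition phase ::
  "real \<Rightarrow> real \<Rightarrow> real \<Rightarrow> (real \<Rightarrow> vec2 \<Rightarrow> vec2 \<Rightarrow> vec2) \<Rightarrow> (real \<Rightarrow> vec2 \<Rightarrow> vec2 \<Rightarrow> vec2) \<Rightarrow>
   real \<Rightarrow> vec2 \<Rightarrow> vec2 \<Rightarrow> vec2 \<Rightarrow> complex" where
  "phase b \<omega> B X \<Xi> t x y \<eta> =
     complex_of_real (action b \<omega> X \<Xi> t y \<eta> + (x - X t y \<eta>) \<bullet> \<Xi> t y \<eta>)
     + \<i> * complex_of_real (B * (norm (x - X t y \<eta>))^2 / 2)"

definition phase_eta_zero ::
  "real \<Rightarrow> real \<Rightarrow> real \<Rightarrow> (real \<Rightarrow> vec2 \<Rightarrow> vec2 \<Rightarrow> vec2) \<Rightarrow> (real \<Rightarrow> vec2 \<Rightarrow> vec2 \<Rightarrow> vec2) \<Rightarrow>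
   real \<Rightarrow> vec2 \<Rightarrow> vec2 \<Rightarrow> vec2 \<Rightarrow> bool" where
  "phase_eta_zero b \<omega> B X \<Xi> t x y \<eta> \<longleftrightarrow>
     ((\<lambda>s. phase b \<omega> B X \<Xi> t x y (\<eta> + (s, 0))) has_vector_derivative 0) (at 0) \<and>
     ((\<lambda>s. phase b \<omega> B X \<Xi> t x y (\<eta> + (0, s))) has_vector_derivative 0) (at 0)"

end

theory Submission
  imports Defs
begin


lemma nsq: "(norm (z::vec2))^2 = fst z^2 + snd z^2"
  by (cases z) (simp add: norm_Pair)

lemma Apot_eq: "Apot b z = (-b *  snd z/(fst z^2+snd z^2), b *  fst z/(fst z^2+snd z^2))"
  by (simp add: Apot_def nsq)

lemma ham_eq: "ham b \<omega> z \<xi> = ((fst \<xi> + b *  snd z/(fst z^2+snd z^2))^2 + (snd \<xi> - b *  fst z/(fst z^2+snd z^2))^2)/2 + \<omega>^2/2*(fst z^2+snd z^2)"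
  by (cases z; cases \<xi>) (simp add: ham_def Apot_def norm_Pair nsq)

lemma Ader:
  fixes a c b :: real
  assumes n0: "a^2+c^2 \<noteq> 0"
  shows "((\<lambda>r. b * c/((a+r)^2+c^2)) has_real_derivative -(2*a*b*c/(a^2+c^2)^2)) (at 0)"
    "((\<lambda>r. b*(a+r)/((a+r)^2+c^2)) has_real_derivative (b*(c^2-a^2)/(a^2+c^2)^2)) (at 0)"
    "((\<lambda>r. b * (c+r)/(a^2+(c+r)^2)) has_real_derivative (b*(a^2-c^2)/(a^2+c^2)^2)) (at 0)"
    "((\<lambda>r. b*a/(a^2+(c+r)^2)) has_real_derivative (-2*a*b*c/(a^2+c^2)^2)) (at 0)"
  using n0 by (auto intro!: derivative_eq_intros simp: field_simps power2_eq_square)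

lemma Ader3:
  fixes a c b :: real
  assumes n0: "a^2+c^2 \<noteq> 0"
  shows "((\<lambda>r. b * (c+r)/(a^2+(c+r)^2)) has_real_derivative -(b*(c^2-a^2)/(a^2+c^2)^2)) (at 0)"
proof -
  have e: "b*(a^2-c^2)/(a^2+c^2)^2 = -(b*(c^2-a^2)/(a^2+c^2)^2)"
    by (metis minus_diff_eq minus_divide_left mult_minus_right)
  show ?thesis using Ader(3)[OF n0, where b=b] unfolding e .
qed

lemma hamd:
  fixes f1 f2 g :: "real \<Rightarrow> real"
  assumes "(f1 has_real_derivative D1) (at 0)" "(f2 has_real_derivative D2) (at 0)" "(g has_real_derivative G) (at 0)"
  shows "((\<lambda>r. ((u + f1 r)^2 + (w - f2 r)^2)/2 + \<omega>^2/2 * g r) has_real_derivative ((u + f1 0)*D1 - (w - f2 0)*D2 + \<omega>^2/2*G)) (at 0)"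
  by (auto intro!: derivative_eq_intros assms simp: field_simps)

lemma ham_line1:
  fixes a c u w :: real
  assumes "a^2 + c^2 > 0"
  defines "n \<equiv> a^2+c^2"
  shows "((\<lambda>r. ham b \<omega> ((a,c) + (r,0)) (u,w)) has_real_derivative
     -((u + b * c/n)*(2*a*b*c/n^2) + (w - b * a/n)*(b*(c^2-a^2)/n^2) - \<omega>^2*a)) (at 0)"
proof -
  have n0: "a^2+c^2 \<noteq> 0" using assms by linarith
  have g: "((\<lambda>r. (a+r)^2+c^2) has_real_derivative 2*a) (at 0)"
    by (auto intro!: derivative_eq_intros)
  have fe: "(\<lambda>r. ham b \<omega> ((a,c) + (r,0)) (u,w)) = (\<lambda>r. ((u + b * c/((a+r)^2+c^2))^2 + (w - b * (a+r)/((a+r)^2+c^2))^2)/2 + \<omega>^2/2*((a+r)^2+c^2))"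
    by (simp add: ham_eq fun_eq_iff)
  show ?thesis unfolding fe
    apply (rule DERIV_cong[OF hamd[OF Ader(1)[OF n0, where b=b] Ader(2)[OF n0, where b=b] g, where u=u and w=w and \<omega>=\<omega>]])
    by (simp add: n_def algebra_simps)
qed

lemma ham_line2:
  fixes a c u w :: real
  assumes "a^2 + c^2 > 0"
  defines "n \<equiv> a^2+c^2"
  shows "((\<lambda>r. ham b \<omega> ((a,c) + (0,r)) (u,w)) has_real_derivative
     -((u + b * c/n)*(b*(c^2-a^2)/n^2) + (w - b * a/n)*(-2*a*b*c/n^2) - \<omega>^2*c)) (at 0)"
proof -
  have n0: "a^2+c^2 \<noteq> 0" using assms by linarith
  have g: "((\<lambda>r. a^2+(c+r)^2) has_real_derivative 2*c) (at 0)"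
    by (auto intro!: derivative_eq_intros)
  have fe: "(\<lambda>r. ham b \<omega> ((a,c) + (0,r)) (u,w)) = (\<lambda>r. ((u + b * (c+r)/(a^2+(c+r)^2))^2 + (w - b * a/(a^2+(c+r)^2))^2)/2 + \<omega>^2/2*(a^2+(c+r)^2))"
    by (simp add: ham_eq fun_eq_iff)
  show ?thesis unfolding fe
    apply (rule DERIV_cong[OF hamd[OF Ader3[OF n0, where b=b] Ader(4)[OF n0, where b=b] g, where u=u and w=w and \<omega>=\<omega>]])
    by (simp add: n_def algebra_simps)
qed

lemma vd_fst: "(f has_vector_derivative D) F \<Longrightarrow> ((\<lambda>r. fst (f r)) has_real_derivative fst D) F"
  using bounded_linear.has_vector_derivative[OF bounded_linear_fst]
  by (simp add: has_real_derivative_iff_has_vector_derivative)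

lemma vd_snd: "(f has_vector_derivative D) F \<Longrightarrow> ((\<lambda>r. snd (f r)) has_real_derivative snd D) F"
  using bounded_linear.has_vector_derivative[OF bounded_linear_snd]
  by (simp add: has_real_derivative_iff_has_vector_derivative)

lemma grad_unique:
  fixes z v :: vec2
  assumes "z \<noteq> 0"
    and "((\<lambda>w. ham b \<omega> w \<xi>) has_derivative (\<lambda>w. - (v \<bullet> w))) (at z)"
  defines "n \<equiv> fst z^2 + snd z^2"
  shows "fst v = (fst \<xi> + b * snd z/n)*(2* fst z*b *  snd z/n^2) + (snd \<xi> - b *  fst z/n)*(b * (snd z^2-fst z^2)/n^2) - \<omega>^2* fst z"
    and "snd v = (fst \<xi> + b * snd z/n)*(b * (snd z^2-fst z^2)/n^2) + (snd \<xi> - b *  fst z/n)*(-2* fst z*b *  snd z/n^2) - \<omega>^2* snd z"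
proof -
  obtain a c where z: "z = (a,c)" by (cases z)
  obtain u w where xi: "\<xi> = (u,w)" by (cases \<xi>)
  have pos: "a^2 + c^2 > 0" using assms(1) z by (auto simp: sum_power2_gt_zero_iff zero_prod_def)
  have l1: "((\<lambda>h. z + (h,0)) has_derivative (\<lambda>h. (h,0))) (at 0)"
    by (auto intro!: derivative_eq_intros)
  have l2: "((\<lambda>h. z + (0,h)) has_derivative (\<lambda>h. (0,h))) (at 0)"
    by (auto intro!: derivative_eq_intros)
  have c1: "((\<lambda>h. ham b \<omega> (z + (h,0)) \<xi>) has_derivative (\<lambda>h. - (v \<bullet> (h,0)))) (at 0)"
  proof -
    have h0: "((\<lambda>w. ham b \<omega> w \<xi>) has_derivative (\<lambda>w. - (v \<bullet> w))) (at ((\<lambda>h. z + (h,0)) 0))"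
      using assms(2) by (metis add.right_neutral zero_prod_def)
    show ?thesis using has_derivative_compose[OF l1 h0] by simp
  qed
  have c2: "((\<lambda>h. ham b \<omega> (z + (0,h)) \<xi>) has_derivative (\<lambda>h. - (v \<bullet> (0,h)))) (at 0)"
  proof -
    have h0: "((\<lambda>w. ham b \<omega> w \<xi>) has_derivative (\<lambda>w. - (v \<bullet> w))) (at ((\<lambda>h. z + (0,h)) 0))"
      using assms(2) by (metis add.right_neutral zero_prod_def)
    show ?thesis using has_derivative_compose[OF l2 h0] by simp
  qed
  have e1: "(\<lambda>h. - (v \<bullet> (h,0))) = (*) (- fst v)"
    by (cases v) (auto simp: inner_Pair)
  have e2: "(\<lambda>h. - (v \<bullet> (0,h))) = (*) (- snd v)"
    by (cases v) (auto simp: inner_Pair)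
  have r1: "((\<lambda>h. ham b \<omega> (z + (h,0)) \<xi>) has_real_derivative (- fst v)) (at 0)"
    using c1 unfolding e1 has_field_derivative_def .
  have r2: "((\<lambda>h. ham b \<omega> (z + (0,h)) \<xi>) has_real_derivative (- snd v)) (at 0)"
    using c2 unfolding e2 has_field_derivative_def .
  show "fst v = (fst \<xi> + b * snd z/n)*(2* fst z*b *  snd z/n^2) + (snd \<xi> - b *  fst z/n)*(b * (snd z^2-fst z^2)/n^2) - \<omega>^2* fst z"
    using DERIV_unique[OF r1 ham_line1[OF pos, of b \<omega> u w, folded z xi]] by (simp add: z xi n_def)
  show "snd v = (fst \<xi> + b * snd z/n)*(b * (snd z^2-fst z^2)/n^2) + (snd \<xi> - b *  fst z/n)*(-2* fst z*b *  snd z/n^2) - \<omega>^2* snd z"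
    using DERIV_unique[OF r2 ham_line2[OF pos, of b \<omega> u w, folded z xi]] by (simp add: z xi n_def)
qed


lemma alg1:
  fixes a c p1 p2 N b \<omega> :: real
  assumes "N = a^2+c^2" "N \<noteq> 0"
  shows "p1*(2*a*b*c/N^2) + p2*(b*(c^2-a^2)/N^2) - \<omega>^2*a + (b*p2*N - b*c*(2*(a*p1 + c*p2)))/N^2 = - (\<omega>^2)*a"
proof -
  have num: "p1*(2*a*b*c) + p2*(b*(c^2-a^2)) + (b*p2*N - b*c*(2*(a*p1 + c*p2))) = 0"
    unfolding assms(1) by (simp add: algebra_simps power2_eq_square)
  have "p1*(2*a*b*c/N^2) + p2*(b*(c^2-a^2)/N^2) + (b*p2*N - b*c*(2*(a*p1 + c*p2)))/N^2 =
     (p1*(2*a*b*c) + p2*(b*(c^2-a^2)) + (b*p2*N - b*c*(2*(a*p1 + c*p2))))/N^2"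
    using assms(2) by (simp add: field_simps)
  then have "p1*(2*a*b*c/N^2) + p2*(b*(c^2-a^2)/N^2) + (b*p2*N - b*c*(2*(a*p1 + c*p2)))/N^2 = 0"
    using num by simp
  then show ?thesis by linarith
qed

lemma alg2:
  fixes a c p1 p2 N b \<omega> :: real
  assumes "N = a^2+c^2" "N \<noteq> 0"
  shows "p1*(b*(c^2-a^2)/N^2) + p2*(-2*a*b*c/N^2) - \<omega>^2*c - (b*p1*N - b*a*(2*(a*p1 + c*p2)))/N^2 = - (\<omega>^2)*c"
proof -
  have num: "p1*(b*(c^2-a^2)) + p2*(-2*a*b*c) - (b*p1*N - b*a*(2*(a*p1 + c*p2))) = 0"
    unfolding assms(1) by (simp add: algebra_simps power2_eq_square)
  have "p1*(b*(c^2-a^2)/N^2) + p2*(-2*a*b*c/N^2) - (b*p1*N - b*a*(2*(a*p1 + c*p2)))/N^2 =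
     (p1*(b*(c^2-a^2)) + p2*(-2*a*b*c) - (b*p1*N - b*a*(2*(a*p1 + c*p2))))/N^2"
    by (simp add: times_divide_eq_right add_divide_distrib diff_divide_distrib)
  then have "p1*(b*(c^2-a^2)/N^2) + p2*(-2*a*b*c/N^2) - (b*p1*N - b*a*(2*(a*p1 + c*p2)))/N^2 = 0"
    using num by simp
  then show ?thesis by linarith
qed

definition xh :: "real \<Rightarrow> vec2 \<Rightarrow> vec2 \<Rightarrow> real \<Rightarrow> vec2" where
  "xh \<omega> y q s = (cos (\<omega> * s) * fst y + sin (\<omega> * s) / \<omega> * fst q, cos (\<omega> * s) * snd y + sin (\<omega> * s) / \<omega> * snd q)"

definition ph :: "real \<Rightarrow> vec2 \<Rightarrow> vec2 \<Rightarrow> real \<Rightarrow> vec2" where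
  "ph \<omega> y q s = (- \<omega> * sin (\<omega> * s) * fst y + cos (\<omega> * s) * fst q, - \<omega> * sin (\<omega> * s) * snd y + cos (\<omega> * s) * snd q)"

lemma xh_deriv:
  assumes "\<omega> \<noteq> 0"
  shows "((\<lambda>r. fst (xh \<omega> y q r)) has_real_derivative fst (ph \<omega> y q r)) (at r within S)"
    "((\<lambda>r. snd (xh \<omega> y q r)) has_real_derivative snd (ph \<omega> y q r)) (at r within S)"
    "((\<lambda>r. fst (ph \<omega> y q r)) has_real_derivative - (\<omega>^2) * fst (xh \<omega> y q r)) (at r within S)"
    "((\<lambda>r. snd (ph \<omega> y q r)) has_real_derivative - (\<omega>^2) * snd (xh \<omega> y q r)) (at r within S)"
  using assms unfolding xh_def ph_def
  by (auto intro!: derivative_eq_intros simp: algebra_simps power2_eq_square)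

lemma flow_explicit:
  assumes om: "\<omega> > 0" and fl: "is_flow b \<omega> X \<Xi>" and y0: "y \<noteq> 0" and w: "wedge y \<eta> \<noteq> b" and s0: "s \<ge> 0"
  defines "q \<equiv> \<eta> - Apot b y"
  shows "X s y \<eta> = xh \<omega> y q s \<and> \<Xi> s y \<eta> = ph \<omega> y q s + Apot b (xh \<omega> y q s)"
proof -
  have F0: "X 0 y \<eta> = y" "\<Xi> 0 y \<eta> = \<eta>"
    using fl y0 w unfolding is_flow_def by blast+
  have F: "X r y \<eta> \<noteq> 0 \<and> ((\<lambda>r. X r y \<eta>) has_vector_derivative (\<Xi> r y \<eta> - Apot b (X r y \<eta>))) (at r within {0..}) \<and>
           (\<exists>v. ((\<lambda>r. \<Xi> r y \<eta>) has_vector_derivative v) (at r within {0..}) \<and>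
                ((\<lambda>z. ham b \<omega> z (\<Xi> r y \<eta>)) has_derivative (\<lambda>w. - (v \<bullet> w))) (at (X r y \<eta>)))" if "r \<ge> 0" for r
    using fl y0 w that unfolding is_flow_def by blast
  define X1 where "X1 r = fst (X r y \<eta>)" for r
  define X2 where "X2 r = snd (X r y \<eta>)" for r
  define N where "N r = X1 r ^ 2 + X2 r ^ 2" for r
  define P1 where "P1 r = fst (\<Xi> r y \<eta>) + b * X2 r / N r" for r
  define P2 where "P2 r = snd (\<Xi> r y \<eta>) - b * X1 r / N r" for r
  have PA: "\<Xi> r y \<eta> - Apot b (X r y \<eta>) = (P1 r, P2 r)" for r
    by (simp add: Apot_eq P1_def P2_def X1_def X2_def N_def prod_eq_iff)
  have Npos: "N r > 0" if "r \<ge> 0" for r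
  proof -
    have "X r y \<eta> \<noteq> 0" using F[OF that] by blast
    then show ?thesis unfolding N_def X1_def X2_def
      by (cases "X r y \<eta>") (auto simp: sum_power2_gt_zero_iff zero_prod_def)
  qed
  have dX1: "(X1 has_real_derivative P1 r) (at r within {0..})" if "r \<ge> 0" for r
    using vd_fst[OF conjunct1[OF conjunct2[OF F[OF that]]]] unfolding PA X1_def[abs_def] by simp
  have dX2: "(X2 has_real_derivative P2 r) (at r within {0..})" if "r \<ge> 0" for r
    using vd_snd[OF conjunct1[OF conjunct2[OF F[OF that]]]] unfolding PA X2_def[abs_def] by simp
  have dP: "(P1 has_real_derivative (- (\<omega>^2) * X1 r)) (at r within {0..}) \<and> (P2 has_real_derivative (- (\<omega>^2) * X2 r)) (at r within {0..})"
    if r0: "r \<ge> 0" for r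
  proof -
    obtain v where hv: "((\<lambda>r. \<Xi> r y \<eta>) has_vector_derivative v) (at r within {0..})"
      and hg: "((\<lambda>z. ham b \<omega> z (\<Xi> r y \<eta>)) has_derivative (\<lambda>w. - (v \<bullet> w))) (at (X r y \<eta>))"
      using F[OF r0] by blast
    have nz: "X r y \<eta> \<noteq> 0" using F[OF r0] by blast
    note g1 = grad_unique(1)[OF nz hg, folded X1_def X2_def, folded N_def]
    note g2 = grad_unique(2)[OF nz hg, folded X1_def X2_def, folded N_def]
    have dXi1: "((\<lambda>r. fst (\<Xi> r y \<eta>)) has_real_derivative fst v) (at r within {0..})"
      using vd_fst[OF hv] .
    have dXi2: "((\<lambda>r. snd (\<Xi> r y \<eta>)) has_real_derivative snd v) (at r within {0..})"
      using vd_snd[OF hv] .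
    have Nr: "N r \<noteq> 0" using Npos[OF r0] by simp
    have Ne: "N r = X1 r^2 + X2 r^2" by (simp add: N_def)
    have dN: "(N has_real_derivative 2*(X1 r*P1 r + X2 r*P2 r)) (at r within {0..})"
      unfolding N_def[abs_def]
      by (auto intro!: derivative_eq_intros dX1[OF r0] dX2[OF r0] simp: algebra_simps)
    have "(P1 has_real_derivative fst v + (b*P2 r*N r - b*X2 r*(2*(X1 r*P1 r + X2 r*P2 r)))/(N r)^2) (at r within {0..})"
      using DERIV_add[OF dXi1 DERIV_divide[OF DERIV_cmult[OF dX2[OF r0], of b] dN Nr]]
      unfolding P1_def[abs_def] by (simp add: power2_eq_square)
    moreover have "fst v + (b*P2 r*N r - b*X2 r*(2*(X1 r*P1 r + X2 r*P2 r)))/(N r)^2 = - (\<omega>^2) * X1 r"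
      unfolding g1 P1_def[symmetric] P2_def[symmetric] using alg1[OF Ne Nr] by simp
    ultimately have R1: "(P1 has_real_derivative (- (\<omega>^2) * X1 r)) (at r within {0..})" by simp
    have "(P2 has_real_derivative snd v - (b*P1 r*N r - b*X1 r*(2*(X1 r*P1 r + X2 r*P2 r)))/(N r)^2) (at r within {0..})"
      using DERIV_diff[OF dXi2 DERIV_divide[OF DERIV_cmult[OF dX1[OF r0], of b] dN Nr]]
      unfolding P2_def[abs_def] by (simp add: power2_eq_square)
    moreover have "snd v - (b*P1 r*N r - b*X1 r*(2*(X1 r*P1 r + X2 r*P2 r)))/(N r)^2 = - (\<omega>^2) * X2 r"
      unfolding g2 P1_def[symmetric] P2_def[symmetric] using alg2[OF Ne Nr] by simp
    ultimately have "(P2 has_real_derivative (- (\<omega>^2) * X2 r)) (at r within {0..})" by simp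
    with R1 show ?thesis ..
  qed
  define x1 where "x1 r = fst (xh \<omega> y q r)" for r
  define x2 where "x2 r = snd (xh \<omega> y q r)" for r
  define p1 where "p1 r = fst (ph \<omega> y q r)" for r
  define p2 where "p2 r = snd (ph \<omega> y q r)" for r
  have om0: "\<omega> \<noteq> 0" using om by simp
  note xd = xh_deriv[OF om0, of y q, folded x1_def x2_def p1_def p2_def]
  define E where "E r = (P1 r - p1 r)^2 + (P2 r - p2 r)^2 + \<omega>^2 * ((X1 r - x1 r)^2 + (X2 r - x2 r)^2)" for r
  have dE: "(E has_real_derivative 0) (at r within {0..})" if r0: "r \<in> {0..}" for r
  proof -
    have r0': "r \<ge> 0" using r0 by simp
    have x1d: "(x1 has_real_derivative p1 r) (at r within {0..})" using xd(1) unfolding x1_def[abs_def] p1_def .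
    have x2d: "(x2 has_real_derivative p2 r) (at r within {0..})" using xd(2) unfolding x2_def[abs_def] p2_def .
    have p1d: "(p1 has_real_derivative - (\<omega>^2) * x1 r) (at r within {0..})" using xd(3) unfolding x1_def p1_def[abs_def] .
    have p2d: "(p2 has_real_derivative - (\<omega>^2) * x2 r) (at r within {0..})" using xd(4) unfolding x2_def p2_def[abs_def] .
    show ?thesis unfolding E_def[abs_def]
      by (auto intro!: derivative_eq_intros x1d x2d p1d p2d dX1[OF r0'] dX2[OF r0'] conjunct1[OF dP[OF r0']] conjunct2[OF dP[OF r0']] simp: algebra_simps)
  qed
  obtain C where C: "\<And>r. r \<in> {0..} \<Longrightarrow> E r = C"
    using has_field_derivative_zero_constant[OF convex_real_interval(1) dE] by blast
  have "E 0 = 0"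
    using F0 y0 unfolding E_def P1_def P2_def N_def X1_def X2_def x1_def x2_def p1_def p2_def q_def xh_def ph_def
    by (simp add: Apot_eq)
  then have "E s = 0" using C[of 0] C[of s] s0 by simp
  then have z: "P1 s = p1 s" "P2 s = p2 s" "X1 s = x1 s" "X2 s = x2 s"
    using om unfolding E_def by (auto simp: add_nonneg_eq_0_iff)
  have Xs: "X s y \<eta> = xh \<omega> y q s"
    using z(3,4) unfolding X1_def X2_def x1_def x2_def by (simp add: prod_eq_iff)
  have "\<Xi> s y \<eta> = (P1 s, P2 s) + Apot b (X s y \<eta>)" using PA[of s] by (simp add: algebra_simps)
  also have "\<dots> = ph \<omega> y q s + Apot b (xh \<omega> y q s)"
    using z(1,2) Xs unfolding p1_def p2_def by simp
  finally show ?thesis using Xs by simp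
qed


lemma alg_rot:
  fixes a1 a2 q1 q2 co si N L :: real
  assumes "N = a1^2 + a2^2" "L = a1*q2 - a2*q1" "N \<noteq> 0"
  shows "q1* co + q2* si + L/N * (- a1* si + a2* co) = (a1*q1+a2*q2)/N * (a1* co + a2* si)"
    and "- q1* si + q2* co - L/N * (a1* co + a2* si) = (a1*q1+a2*q2)/N * (- a1* si + a2* co)"
proof -
  have "(q1* co + q2* si)*N + L * (- a1* si + a2* co) = (a1*q1+a2*q2) * (a1* co + a2* si)"
    unfolding assms(1,2) by (simp add: algebra_simps power2_eq_square)
  then show "q1* co + q2* si + L/N * (- a1* si + a2* co) = (a1*q1+a2*q2)/N * (a1* co + a2* si)"
    using assms(3) by (simp add: field_simps)
  have "(- q1* si + q2* co)*N - L * (a1* co + a2* si) = (a1*q1+a2*q2) * (- a1* si + a2* co)"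
    unfolding assms(1,2) by (simp add: algebra_simps power2_eq_square)
  then show "- q1* si + q2* co - L/N * (a1* co + a2* si) = (a1*q1+a2*q2)/N * (- a1* si + a2* co)"
    using assms(3) by (simp add: field_simps)
qed

lemma action_explicit:
  fixes \<omega> t b :: real and y q :: vec2
  assumes om: "\<omega> > 0" and t0: "t \<ge> 0" and st: "sin (\<omega> * t) = 0" and L0: "wedge y q \<noteq> 0"
  shows "\<exists>\<theta>. sin \<theta> = 0 \<and>
    integral {0..t} (\<lambda>s. ph \<omega> y q s \<bullet> (ph \<omega> y q s + Apot b (xh \<omega> y q s))
        - ham b \<omega> (xh \<omega> y q s) (ph \<omega> y q s + Apot b (xh \<omega> y q s))) = b * \<theta>"
proof -
  have om0: "\<omega> \<noteq> 0" using om by simp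
  define x1 where "x1 r = fst (xh \<omega> y q r)" for r
  define x2 where "x2 r = snd (xh \<omega> y q r)" for r
  define p1 where "p1 r = fst (ph \<omega> y q r)" for r
  define p2 where "p2 r = snd (ph \<omega> y q r)" for r
  define L where "L = wedge y q"
  define N where "N r = x1 r ^ 2 + x2 r ^ 2" for r
  note xd = xh_deriv[OF om0, of y q, folded x1_def x2_def p1_def p2_def]
  have x1d: "(x1 has_real_derivative p1 r) (at r within S)" for r S using xd(1) unfolding x1_def[abs_def] p1_def .
  have x2d: "(x2 has_real_derivative p2 r) (at r within S)" for r S using xd(2) unfolding x2_def[abs_def] p2_def .
  have p1d: "(p1 has_real_derivative - (\<omega>^2) * x1 r) (at r within S)" for r S using xd(3) unfolding x1_def p1_def[abs_def] .
  have p2d: "(p2 has_real_derivative - (\<omega>^2) * x2 r) (at r within S)" for r S using xd(4) unfolding x2_def p2_def[abs_def] .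
  have cross: "x1 r * p2 r - x2 r * p1 r = L" for r
  proof -
    have sq: "sin (\<omega>*r) * sin (\<omega>*r) = 1 - cos (\<omega>*r) * cos (\<omega>*r)"
      using sin_squared_eq[of "\<omega>*r"] by (simp add: power2_eq_square)
    show ?thesis
      unfolding x1_def x2_def p1_def p2_def xh_def ph_def L_def wedge_def using om0
      by (simp add: field_simps sq)
  qed
  have Npos: "N r > 0" for r
  proof -
    have "x1 r \<noteq> 0 \<or> x2 r \<noteq> 0" using cross[of r] L0 unfolding L_def by auto
    then show ?thesis unfolding N_def by (auto simp: sum_power2_gt_zero_iff)
  qed
  have Nd: "(N has_real_derivative 2*(x1 r*p1 r + x2 r*p2 r)) (at r within S)" for r S
    unfolding N_def[abs_def] by (auto intro!: derivative_eq_intros x1d x2d simp: algebra_simps)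
  have contN: "continuous_on S N" for S
    unfolding N_def[abs_def] x1_def[abs_def] x2_def[abs_def] xh_def using om0 by (auto intro!: continuous_intros)
  have contLN: "continuous_on S (\<lambda>r. L / N r)" for S
    using contN Npos by (auto intro!: continuous_intros simp: less_imp_neq[symmetric])
  define K where "K r = (x1 r * p1 r + x2 r * p2 r)/2" for r
  have Kd: "(K has_real_derivative ((p1 r^2 + p2 r^2)/2 - \<omega>^2/2 * N r)) (at r within S)" for r S
    unfolding K_def[abs_def] N_def by (auto intro!: derivative_eq_intros x1d x2d p1d p2d simp: field_simps power2_eq_square)
  have integrand: "ph \<omega> y q s \<bullet> (ph \<omega> y q s + Apot b (xh \<omega> y q s))
        - ham b \<omega> (xh \<omega> y q s) (ph \<omega> y q s + Apot b (xh \<omega> y q s))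
     = ((p1 s^2 + p2 s^2)/2 - \<omega>^2/2 * N s) + b * (L / N s)" for s
  proof -
    have n0: "N s \<noteq> 0" using Npos[of s] by simp
    have "ph \<omega> y q s \<bullet> (ph \<omega> y q s + Apot b (xh \<omega> y q s))
        - ham b \<omega> (xh \<omega> y q s) (ph \<omega> y q s + Apot b (xh \<omega> y q s))
      = p1 s * (p1 s - b * x2 s / N s) + p2 s * (p2 s + b * x1 s / N s) - ((p1 s^2 + p2 s^2)/2 + \<omega>^2/2 * N s)"
      unfolding ham_eq Apot_eq
      by (simp add: inner_prod_def x1_def[symmetric] x2_def[symmetric] p1_def[symmetric] p2_def[symmetric] N_def[symmetric])
    also have "\<dots> = ((p1 s^2 + p2 s^2)/2 - \<omega>^2/2 * N s) + b * ((x1 s * p2 s - x2 s * p1 s) / N s)"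
      using n0 by (simp add: field_simps power2_eq_square)
    finally show ?thesis unfolding cross .
  qed
  define th where "th r = integral {0..r} (\<lambda>s. L / N s)" for r
  have int1: "integral {0..t} (\<lambda>s. (p1 s^2 + p2 s^2)/2 - \<omega>^2/2 * N s) = K t - K 0"
    apply (rule integral_unique)
    apply (rule fundamental_theorem_of_calculus[OF t0])
    using Kd by (simp add: has_real_derivative_iff_has_vector_derivative[symmetric])
  have Kt: "K t = K 0"
  proof -
    have c2: "(cos (\<omega>*t))^2 = 1" using st sin_cos_squared_add[of "\<omega>*t"] by simp
    show ?thesis unfolding K_def x1_def x2_def p1_def p2_def xh_def ph_def using st c2
      by (simp add: algebra_simps power2_eq_square)
  qed
  have I: "integral {0..t} (\<lambda>s. ph \<omega> y q s \<bullet> (ph \<omega> y q s + Apot b (xh \<omega> y q s))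
        - ham b \<omega> (xh \<omega> y q s) (ph \<omega> y q s + Apot b (xh \<omega> y q s))) = b * th t"
  proof -
    have i1: "(\<lambda>s. (p1 s^2 + p2 s^2)/2 - \<omega>^2/2 * N s) integrable_on {0..t}"
      by (rule integrable_continuous_interval)
        (auto intro!: continuous_intros contN simp: p1_def[abs_def] p2_def[abs_def] ph_def)
    have i2: "(\<lambda>s. b * (L / N s)) integrable_on {0..t}"
      by (rule integrable_continuous_interval, rule continuous_on_mult_left, rule contLN)
    show ?thesis unfolding integrand integral_add[OF i1 i2] int1 Kt th_def integral_mult_right by simp
  qed
  have thd: "(th has_real_derivative L / N r) (at r within {0..t})" if "r \<in> {0..t}" for r
    using integral_has_real_derivative[OF contLN that] unfolding th_def[abs_def] .
  define P where "P r = x1 r * cos (th r) + x2 r * sin (th r)" for r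
  define Q where "Q r = - x1 r * sin (th r) + x2 r * cos (th r)" for r
  have Pd: "(P has_real_derivative (x1 r*p1 r + x2 r*p2 r)/N r * P r) (at r within {0..t})" if r: "r \<in> {0..t}" for r
  proof -
    have "(P has_real_derivative (p1 r * cos (th r) + p2 r * sin (th r) + L / N r * (- x1 r * sin (th r) + x2 r * cos (th r)))) (at r within {0..t})"
      unfolding P_def[abs_def] by (auto intro!: derivative_eq_intros x1d x2d thd[OF r] simp: algebra_simps)
    then show ?thesis unfolding P_def
      using alg_rot(1)[OF N_def cross[symmetric], of r] Npos[of r] by simp
  qed
  have Qd: "(Q has_real_derivative (x1 r*p1 r + x2 r*p2 r)/N r * Q r) (at r within {0..t})" if r: "r \<in> {0..t}" for r
  proof -
    have "(Q has_real_derivative (- p1 r * sin (th r) + p2 r * cos (th r) - L / N r * (x1 r * cos (th r) + x2 r * sin (th r)))) (at r within {0..t})"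
      unfolding Q_def[abs_def] by (auto intro!: derivative_eq_intros x1d x2d thd[OF r] simp: algebra_simps)
    then show ?thesis unfolding Q_def
      using alg_rot(2)[OF N_def cross[symmetric], of r] Npos[of r] by simp
  qed
  define Z where "Z r = fst y * Q r - snd y * P r" for r
  have Zd: "(Z has_real_derivative (x1 r*p1 r + x2 r*p2 r)/N r * Z r) (at r within {0..t})" if r: "r \<in> {0..t}" for r
  proof -
    have n0: "N r \<noteq> 0" using Npos[of r] by simp
    show ?thesis unfolding Z_def[abs_def] using n0
      by (auto intro!: derivative_eq_intros Pd[OF r] Qd[OF r] simp: field_simps)
  qed
  define W where "W r = Z r ^ 2 / N r" for r
  have Wd: "(W has_real_derivative 0) (at r within {0..t})" if r: "r \<in> {0..t}" for r
  proof -
    have n0: "N r \<noteq> 0" using Npos[of r] by simp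
    show ?thesis unfolding W_def[abs_def]
      by (auto intro!: derivative_eq_intros Zd[OF r] Nd n0 simp: field_simps power2_eq_square)
  qed
  obtain C where C: "\<And>r. r \<in> {0..t} \<Longrightarrow> W r = C"
    using has_field_derivative_zero_constant[OF convex_real_interval(5) Wd] by blast
  have th0: "th 0 = 0" by (simp add: th_def)
  have W0: "W 0 = 0"
    unfolding W_def Z_def P_def Q_def th0 x1_def x2_def xh_def by simp
  have "W t = 0" using C[of 0] C[of t] t0 W0 by simp
  then have Zt: "Z t = 0" using Npos[of t] unfolding W_def by simp
  have c2: "(cos (\<omega>*t))^2 = 1" using st sin_cos_squared_add[of "\<omega>*t"] by simp
  then have c0: "cos (\<omega>*t) \<noteq> 0" by auto
  have y0: "fst y ^ 2 + snd y ^ 2 \<noteq> 0" using L0 unfolding wedge_def by (auto simp: power2_eq_square)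
  have "Z t = - cos (\<omega>*t) * (fst y ^ 2 + snd y ^ 2) * sin (th t)"
    unfolding Z_def P_def Q_def x1_def x2_def xh_def using st by (simp add: algebra_simps power2_eq_square)
  then have "sin (th t) = 0" using Zt c0 y0 by auto
  then show ?thesis using I by blast
qed

lemma disc_const:
  fixes g :: "real \<Rightarrow> real"
  assumes gd: "(g has_real_derivative 0) (at 0)"
    and ev: "eventually (\<lambda>h. \<exists>\<theta>. sin \<theta> = 0 \<and> g h = b*\<theta> + C + k*h) (nhds 0)"
  shows "k = 0"
proof -
  have "eventually (\<lambda>h. g h = g 0 + k*h) (nhds 0)"
  proof (cases "b = 0")
    case True
    have "eventually (\<lambda>h. g h = C + k*h) (nhds 0)" using ev True by (auto elim: eventually_mono)
    moreover have "g 0 = C" using eventually_nhds_x_imp_x[OF ev] True by auto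
    ultimately show ?thesis by simp
  next
    case False
    define F where "F h = (g h - C - k*h)/b" for h
    have "isCont F 0" using DERIV_isCont[OF gd] False unfolding F_def[abs_def] by (auto intro!: continuous_intros)
    then have "(F \<longlongrightarrow> F 0) (nhds 0)" unfolding isCont_def tendsto_nhds_iff by simp
    then have e1: "eventually (\<lambda>h. dist (F h) (F 0) < pi) (nhds 0)" by (rule tendstoD) simp
    have e2: "eventually (\<lambda>h. sin (F h) = 0) (nhds 0)"
      using ev False by (auto elim!: eventually_mono simp: F_def)
    have s0: "sin (F 0) = 0" using eventually_nhds_x_imp_x[OF e2] .
    have "eventually (\<lambda>h. F h = F 0) (nhds 0)"
      using e1 e2
    proof eventually_elim
      case (elim h)
      obtain i :: int where i: "F h = i * pi" using elim(2) sin_zero_iff_int2 by blast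
      obtain j :: int where j: "F 0 = j * pi" using s0 sin_zero_iff_int2 by blast
      have "\<bar>real_of_int i - j\<bar> * pi < 1 * pi" using elim(1) i j by (simp add: dist_real_def left_diff_distrib[symmetric] abs_mult)
      then have "\<bar>real_of_int i - j\<bar> < 1" by (simp only: mult_less_cancel_right) simp
      then have "i = j" by linarith
      then show ?case using i j by simp
    qed
    then show ?thesis
      by (auto elim!: eventually_mono simp: F_def False field_simps)
  qed
  then have "((\<lambda>h. g 0 + k*h) has_real_derivative 0) (at 0)" using DERIV_cong_ev[OF refl _ refl, of g "\<lambda>h. g 0 + k*h" 0 0] gd by blast
  moreover have "((\<lambda>h. g 0 + k*h) has_real_derivative k) (at 0)" by (auto intro!: derivative_eq_intros)
  ultimately show ?thesis using DERIV_unique by blast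
qed


lemma wedge_Apot:
  assumes "y \<noteq> 0" shows "wedge y (Apot b y) = b"
proof -
  define n where "n = fst y^2 + snd y^2"
  have n0: "n \<noteq> 0" using assms unfolding n_def
    by (cases y) (auto simp: zero_prod_def sum_power2_eq_zero_iff)
  have "wedge y (Apot b y) = fst y * (b * fst y / n) - snd y * (- b * snd y / n)"
    by (simp add: wedge_def Apot_eq n_def)
  also have "\<dots> = b * n / n" by (simp add: n_def algebra_simps power2_eq_square add_divide_distrib diff_divide_distrib)
  finally show ?thesis using n0 by simp
qed

lemma wedge_diff: "wedge y (u - v) = wedge y u - wedge y v"
  by (simp add: wedge_def algebra_simps)

lemma wedge_add: "wedge y (u + v) = wedge y u + wedge y v"
  by (simp add: wedge_def algebra_simps)

lemma dir_lemma:
  fixes e :: vec2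
  assumes om: "\<omega> > 0" and B: "B > 0" and t0: "t \<ge> 0" and fl: "is_flow b \<omega> X \<Xi>"
    and y0: "y \<noteq> 0" and w: "wedge y \<eta> \<noteq> b"
    and D: "((\<lambda>s. phase b \<omega> B X \<Xi> t x y (\<eta> + s *\<^sub>R e)) has_vector_derivative 0) (at 0)"
  shows "sin (\<omega>*t) * ((x - xh \<omega> y (\<eta> - Apot b y) t) \<bullet> e) = 0"
    and "sin (\<omega>*t) = 0 \<Longrightarrow> (x - cos (\<omega>*t) *\<^sub>R y) \<bullet> e = 0"
proof -
  define q where "q = \<eta> - Apot b y"
  have om0: "\<omega> \<noteq> 0" using om by simp
  have "isCont (\<lambda>h. wedge y (\<eta> + h *\<^sub>R e)) 0"
    unfolding wedge_def by (intro continuous_intros)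
  then have "((\<lambda>h. wedge y (\<eta> + h *\<^sub>R e)) \<longlongrightarrow> wedge y \<eta>) (nhds 0)"
    unfolding isCont_def tendsto_nhds_iff by simp
  then have ev: "eventually (\<lambda>h. wedge y (\<eta> + h *\<^sub>R e) \<noteq> b) (nhds 0)"
    using w by (rule tendsto_imp_eventually_ne)
  have qh: "\<eta> + h *\<^sub>R e - Apot b y = q + h *\<^sub>R e" for h
    unfolding q_def by (simp add: algebra_simps)
  have FL: "X s y (\<eta> + h *\<^sub>R e) = xh \<omega> y (q + h *\<^sub>R e) s \<and>
      \<Xi> s y (\<eta> + h *\<^sub>R e) = ph \<omega> y (q + h *\<^sub>R e) s + Apot b (xh \<omega> y (q + h *\<^sub>R e) s)"
    if "wedge y (\<eta> + h *\<^sub>R e) \<noteq> b" "s \<ge> 0" for h s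
    using flow_explicit[OF om fl y0 that] unfolding qh .
  have DI: "((\<lambda>h. Im (phase b \<omega> B X \<Xi> t x y (\<eta> + h *\<^sub>R e))) has_real_derivative 0) (at 0)"
    using bounded_linear.has_vector_derivative[OF bounded_linear_Im D]
    by (simp add: has_real_derivative_iff_has_vector_derivative)
  define d where "d = x - xh \<omega> y q t"
  define \<kappa> where "\<kappa> = sin (\<omega>*t) / \<omega>"
  have xhq: "xh \<omega> y (q + h *\<^sub>R e) t = xh \<omega> y q t + (h * \<kappa>) *\<^sub>R e" for h
    unfolding xh_def \<kappa>_def by (simp add: algebra_simps prod_eq_iff)
  define fI where "fI h = B * ((fst d - h*\<kappa>* fst e)^2 + (snd d - h*\<kappa>* snd e)^2)/2" for h
  have evI: "eventually (\<lambda>h. Im (phase b \<omega> B X \<Xi> t x y (\<eta> + h *\<^sub>R e)) = fI h) (nhds 0)"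
    using ev
  proof (rule eventually_mono)
    fix h assume "wedge y (\<eta> + h *\<^sub>R e) \<noteq> b"
    then have "X t y (\<eta> + h *\<^sub>R e) = xh \<omega> y q t + (h * \<kappa>) *\<^sub>R e" using FL t0 xhq by simp
    then show "Im (phase b \<omega> B X \<Xi> t x y (\<eta> + h *\<^sub>R e)) = fI h"
      unfolding phase_def fI_def d_def by (simp add: nsq algebra_simps)
  qed
  have "(fI has_real_derivative 0) (at 0)"
    using DERIV_cong_ev[OF refl evI refl] DI by blast
  moreover have "(fI has_real_derivative B * (2* fst d*(-\<kappa>* fst e) + 2* snd d*(-\<kappa>* snd e))/2) (at 0)"
    unfolding fI_def[abs_def] by (auto intro!: derivative_eq_intros)
  ultimately have "B * (2* fst d*(-\<kappa>* fst e) + 2* snd d*(-\<kappa>* snd e))/2 = 0" using DERIV_unique by blast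
  then have "B * (\<kappa> * (fst d * fst e + snd d * snd e)) = 0" by (simp add: algebra_simps)
  then have "\<kappa> * (fst d * fst e + snd d * snd e) = 0" using B by simp
  then have "sin (\<omega>*t) * (d \<bullet> e) = 0" using om0 unfolding \<kappa>_def by (simp add: inner_prod_def)
  then show "sin (\<omega>*t) * ((x - xh \<omega> y (\<eta> - Apot b y) t) \<bullet> e) = 0" unfolding d_def q_def .
  show "(x - cos (\<omega>*t) *\<^sub>R y) \<bullet> e = 0" if st: "sin (\<omega>*t) = 0"
  proof -
    define c where "c = cos (\<omega>*t)"
    have c2: "c^2 = 1" using st sin_cos_squared_add[of "\<omega>*t"] unfolding c_def by simp
    then have c0: "c \<noteq> 0" by auto
    have xh_t: "xh \<omega> y q' t = c *\<^sub>R y" for q'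
      by (cases y) (simp add: xh_def st c_def)
    have ph_t: "ph \<omega> y q' t = c *\<^sub>R q'" for q'
      by (cases q') (simp add: ph_def st c_def)
    have Ac: "Apot b (c *\<^sub>R y) = c *\<^sub>R Apot b y"
      by (cases y) (simp add: Apot_eq power_mult_distrib c2 distrib_left[symmetric])
    have DR: "((\<lambda>h. Re (phase b \<omega> B X \<Xi> t x y (\<eta> + h *\<^sub>R e))) has_real_derivative 0) (at 0)"
      using bounded_linear.has_vector_derivative[OF bounded_linear_Re D]
      by (simp add: has_real_derivative_iff_has_vector_derivative)
    have evR: "eventually (\<lambda>h. \<exists>\<theta>. sin \<theta> = 0 \<and> Re (phase b \<omega> B X \<Xi> t x y (\<eta> + h *\<^sub>R e))
        = b*\<theta> + c * ((x - c *\<^sub>R y) \<bullet> \<eta>) + (c * ((x - c *\<^sub>R y) \<bullet> e))*h) (nhds 0)"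
      using ev
    proof (rule eventually_mono)
      fix h assume wh: "wedge y (\<eta> + h *\<^sub>R e) \<noteq> b"
      have Xt: "X t y (\<eta> + h *\<^sub>R e) = c *\<^sub>R y" using FL[OF wh t0] xh_t by simp
      have "\<Xi> t y (\<eta> + h *\<^sub>R e) = c *\<^sub>R (q + h *\<^sub>R e) + c *\<^sub>R Apot b y"
        using FL[OF wh t0] xh_t ph_t Ac by simp
      also have "\<dots> = c *\<^sub>R (\<eta> + h *\<^sub>R e)" unfolding q_def by (simp add: algebra_simps)
      finally have Xit: "\<Xi> t y (\<eta> + h *\<^sub>R e) = c *\<^sub>R (\<eta> + h *\<^sub>R e)" .
      have wq: "wedge y (q + h *\<^sub>R e) \<noteq> 0"
        using wh unfolding qh[symmetric] wedge_diff wedge_Apot[OF y0] by simp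
      obtain \<theta> where th: "sin \<theta> = 0" and I: "integral {0..t} (\<lambda>s. ph \<omega> y (q + h *\<^sub>R e) s \<bullet> (ph \<omega> y (q + h *\<^sub>R e) s + Apot b (xh \<omega> y (q + h *\<^sub>R e) s))
        - ham b \<omega> (xh \<omega> y (q + h *\<^sub>R e) s) (ph \<omega> y (q + h *\<^sub>R e) s + Apot b (xh \<omega> y (q + h *\<^sub>R e) s))) = b * \<theta>"
        using action_explicit[OF om t0 st wq, of b] by blast
      have "action b \<omega> X \<Xi> t y (\<eta> + h *\<^sub>R e) = b * \<theta>"
        unfolding action_def I[symmetric]
        by (rule integral_cong) (use FL[OF wh] in auto)
      then have "Re (phase b \<omega> B X \<Xi> t x y (\<eta> + h *\<^sub>R e))
        = b*\<theta> + c * ((x - c *\<^sub>R y) \<bullet> \<eta>) + (c * ((x - c *\<^sub>R y) \<bullet> e))*h"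
        unfolding phase_def Xt Xit by (simp add: inner_add_right algebra_simps)
      then show "\<exists>\<theta>. sin \<theta> = 0 \<and> Re (phase b \<omega> B X \<Xi> t x y (\<eta> + h *\<^sub>R e))
        = b*\<theta> + c * ((x - c *\<^sub>R y) \<bullet> \<eta>) + (c * ((x - c *\<^sub>R y) \<bullet> e))*h" using th by blast
    qed
    have "c * ((x - c *\<^sub>R y) \<bullet> e) = 0" by (rule disc_const[OF DR evR])
    then show ?thesis using c0 unfolding c_def by simp
  qed
qed

theorem proposition3p4:
  fixes b \<omega> B t :: real
    and X \<Xi> :: "real \<Rightarrow> vec2 \<Rightarrow> vec2 \<Rightarrow> vec2"
  assumes "\<omega> > 0" and "B > 0" and "t \<ge> 0"
    and "is_flow b \<omega> X \<Xi>"
  shows "{(x, y, \<eta>). y \<noteq> 0 \<and> wedge y \<eta> \<noteq> b \<and> phase_eta_zero b \<omega> B X \<Xi> t x y \<eta>}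
         \<subseteq> {(x, y, \<eta>). wedge x y = - (sin (\<omega> * t) / \<omega>) * (wedge y \<eta> - b)}"
proof
  fix z assume "z \<in> {(x, y, \<eta>). y \<noteq> 0 \<and> wedge y \<eta> \<noteq> b \<and> phase_eta_zero b \<omega> B X \<Xi> t x y \<eta>}"
  then obtain x y \<eta> where z: "z = (x, y, \<eta>)" and y0: "y \<noteq> 0" and w: "wedge y \<eta> \<noteq> b"
    and pz: "phase_eta_zero b \<omega> B X \<Xi> t x y \<eta>" by auto
  have e1: "(\<lambda>s. phase b \<omega> B X \<Xi> t x y (\<eta> + (s, 0))) = (\<lambda>s. phase b \<omega> B X \<Xi> t x y (\<eta> + s *\<^sub>R (1,0)))"
    by simp
  have e2: "(\<lambda>s. phase b \<omega> B X \<Xi> t x y (\<eta> + (0, s))) = (\<lambda>s. phase b \<omega> B X \<Xi> t x y (\<eta> + s *\<^sub>R (0,1)))"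
    by simp
  have D1: "((\<lambda>s. phase b \<omega> B X \<Xi> t x y (\<eta> + s *\<^sub>R (1,0))) has_vector_derivative 0) (at 0)"
    using pz unfolding phase_eta_zero_def e1 by blast
  have D2: "((\<lambda>s. phase b \<omega> B X \<Xi> t x y (\<eta> + s *\<^sub>R (0,1))) has_vector_derivative 0) (at 0)"
    using pz unfolding phase_eta_zero_def e2 by blast
  note L1 = dir_lemma[OF assms(1,2,3,4) y0 w D1]
  note L2 = dir_lemma[OF assms(1,2,3,4) y0 w D2]
  define q where "q = \<eta> - Apot b y"
  have wq: "wedge y q = wedge y \<eta> - b" unfolding q_def wedge_diff wedge_Apot[OF y0] ..
  have "wedge x y = - (sin (\<omega> * t) / \<omega>) * (wedge y \<eta> - b)"
  proof (cases "sin (\<omega>*t) = 0")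
    case True
    have "fst (x - cos (\<omega>*t) *\<^sub>R y) = 0" "snd (x - cos (\<omega>*t) *\<^sub>R y) = 0"
      using L1(2)[OF True] L2(2)[OF True] by (simp_all add: inner_prod_def)
    then have "x = cos (\<omega>*t) *\<^sub>R y" by (simp add: prod_eq_iff)
    then show ?thesis using True by (simp add: wedge_def)
  next
    case False
    have "fst (x - xh \<omega> y q t) = 0" "snd (x - xh \<omega> y q t) = 0"
      using L1(1) L2(1) False unfolding q_def[symmetric] by (simp_all add: inner_prod_def)
    then have "x = xh \<omega> y q t" by (simp add: prod_eq_iff)
    then have "wedge x y = - (sin (\<omega> * t) / \<omega>) * wedge y q"
      by (simp add: wedge_def xh_def algebra_simps)
    then show ?thesis unfolding wq .
  qed
  then show "z \<in> {(x, y, \<eta>). wedge x y = - (sin (\<omega> * t) / \<omega>) * (wedge y \<eta> - b)}"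
    unfolding z by simp
qed

end
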